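(* Suppose $\mathcal M$ is unichain and indexable, and $\widehat{\mathcal M}$ has the same rewards and the same support as $\mathcal M$ and satisfies Assumption (A). There exists a constant $c_\alpha>0$ depending only on $\mathcal M$ such that for every state $s\in\mathcal S$ and every policy $\pi\subseteq\mathcal S$, $$|\alpha^\pi_s-\hat\alpha^\pi_s|\le c_\alpha\|\mathcal M-\widehat{\mathcal M}\|_\infty,$$ where $\alpha^\pi_s$ and $\hat\alpha^\pi_s$ are the activation advantages of $s$ under $\pi$ in $\mathcal M$ and $\widehat{\mathcal M}$ respectively. (One may take $c_\alpha=\max_\pi\{\mathrm{sp}(b^\pi)+8D(P^\pi)\mathrm{sp}(b^\pi)+\tfrac12\mathrm{sp}(b^{\pi,1})\}$, where $b^{\pi,1}$ solves $b^{\pi,1}=b^\pi+P^\pi b^{\pi,1}$.)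
   Context: Setting. An MDP is $\mathcal M=(\mathcal S,\{0,1\},(P^a)_a,(r^a)_a)$, finite $\mathcal S$, row-stochastic $P^0,P^1$, rewards $r^0,r^1\in\mathbb R^{\mathcal S}$. A policy is a subset $\pi\subseteq\mathcal S$ of states where action 1 is played, inducing $P^\pi$, $r^\pi$; $\mathcal M$ is unichain if every $P^\pi$ has a single recurrent class. For a unichain policy, gain $g^\pi$ and bias $b^\pi$ (up to an additive constant) solve $g^\pi\mathbf 1+b^\pi=r^\pi+P^\pi b^\pi$; the activation advantage is $\alpha^\pi_s=r^1_s-r^0_s+(P^1_{s,\cdot}-P^0_{s,\cdot})\cdot b^\pi$. For $\lambda\in\mathbb R$, $\mathcal M(\lambda)$ has the same transitions and rewards $r^1-\lambda\mathbf 1$, $r^0$, with advantages $\alpha^\pi_s(\lambda)$ defined likewise (including the term $-\lambda$). BO (bias optimal) policy in $\mathcal M(\lambda)$: gain optimal and bias-maximal among gain-optimal policies; for unichain MDPs, $\pi$ is BO iff $\alpha^\pi_s(\lambda)\ge0$ for $s\in\pi$, $\le0$ for $s\notin\pi$. $\alpha^*_s(\lambda)$ is $\alpha^\pi_s(\lambda)$ for any BO $\pi$. $\mathcal M$ indexable: for each $s$ there is $\lambda_s$ (Whittle index) with $\alpha^*_s(\lambda)>0$ for $\lambda<\lambda_s$ and $<0$ for $\lambda>\lambda_s$. Hats denote objects in $\widehat{\mathcal M}=(\mathcal S,\{0,1\},(\hat P^a)_a,(r^a)_a)$. $\|A\|_\infty=\max_s\sum_{s'}|A_{s,s'}|$;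 $\|\mathcal M-\widehat{\mathcal M}\|_\infty=\max_a\|P^a-\hat P^a\|_\infty$. Same support: $P^a_{s,s'}>0\iff\hat P^a_{s,s'}>0$. $\mathrm{sp}(v)=\max v-\min v$. Diameter of unichain $P$ with recurrent class $\mathcal S_r$: $D(P)=\max_{s\in\mathcal S,s'\in\mathcal S_r}\mathbb E^P[\tau_{s,s'}]$. Assumption (A): $\|\mathcal M-\widehat{\mathcal M}\|_\infty\le\min\{1/\max_\pi D(P^\pi),\ \tfrac12\min\{|\lambda_s-\lambda_{s'}|:\lambda_s\ne\lambda_{s'}\}\}$. *)

theory Defs
  imports Complex_Main
begin

text \<open>States: a finite type 'a. Actions: bool (False = passive 0, True = active 1).
  A transition kernel family P :: bool => 'a => 'a => real, rewards r :: bool => 'a => real.\<close>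

definition stochastic :: "('a::finite \<Rightarrow> 'a \<Rightarrow> real) \<Rightarrow> bool" where
  "stochastic A \<longleftrightarrow> (\<forall>i j. 0 \<le> A i j) \<and> (\<forall>i. (\<Sum>j\<in>UNIV. A i j) = 1)"

definition polP :: "(bool \<Rightarrow> 'a \<Rightarrow> 'a \<Rightarrow> real) \<Rightarrow> 'a set \<Rightarrow> 'a \<Rightarrow> 'a \<Rightarrow> real" where
  "polP P pol i j = (if i \<in> pol then P True i j else P False i j)"

definition polr :: "(bool \<Rightarrow> 'a \<Rightarrow> real) \<Rightarrow> 'a set \<Rightarrow> 'a \<Rightarrow> real" where
  "polr r pol i = (if i \<in> pol then r True i else r False i)"

definition lamr :: "(bool \<Rightarrow> 'a \<Rightarrow> real) \<Rightarrow> real \<Rightarrow> bool \<Rightarrow> 'a \<Rightarrow> real" where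
  "lamr r lam a i = (if a then r True i - lam else r False i)"

definition reach :: "('a \<Rightarrow> 'a \<Rightarrow> real) \<Rightarrow> 'a \<Rightarrow> 'a \<Rightarrow> bool" where
  "reach A i j \<longleftrightarrow> (i, j) \<in> {(x, y). A x y > 0}\<^sup>*"

definition recurrent :: "('a \<Rightarrow> 'a \<Rightarrow> real) \<Rightarrow> 'a \<Rightarrow> bool" where
  "recurrent A i \<longleftrightarrow> (\<forall>j. reach A i j \<longrightarrow> reach A j i)"

definition single_rec_class :: "('a \<Rightarrow> 'a \<Rightarrow> real) \<Rightarrow> bool" where
  "single_rec_class A \<longleftrightarrow> (\<exists>i. recurrent A i) \<and>
     (\<forall>i j. recurrent A i \<and> recurrent A j \<longrightarrow> reach A i j)"

definition unichain :: "(bool \<Rightarrow> 'a \<Rightarrow> 'a \<Rightarrow> real) \<Rightarrow> bool" where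
  "unichain P \<longleftrightarrow> (\<forall>pol. single_rec_class (polP P pol))"

definition poisson :: "('a::finite \<Rightarrow> 'a \<Rightarrow> real) \<Rightarrow> ('a \<Rightarrow> real) \<Rightarrow> real \<Rightarrow> ('a \<Rightarrow> real) \<Rightarrow> bool" where
  "poisson A rr g b \<longleftrightarrow> (\<forall>i. g + b i = rr i + (\<Sum>j\<in>UNIV. A i j * b j))"

definition adv :: "(bool \<Rightarrow> 'a::finite \<Rightarrow> 'a \<Rightarrow> real) \<Rightarrow> (bool \<Rightarrow> 'a \<Rightarrow> real) \<Rightarrow> ('a \<Rightarrow> real) \<Rightarrow> 'a \<Rightarrow> real" where
  "adv P r b s = r True s - r False s + (\<Sum>j\<in>UNIV. (P True s j - P False s j) * b j)"

text \<open>Bias-optimal policies in M(lambda), via the unichain characterisation given in the context: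
  pol is BO iff alpha^pi_s(lambda) >= 0 on pol and <= 0 off pol (b a bias of pol in M(lambda)).\<close>
definition BO :: "(bool \<Rightarrow> 'a::finite \<Rightarrow> 'a \<Rightarrow> real) \<Rightarrow> (bool \<Rightarrow> 'a \<Rightarrow> real) \<Rightarrow> real \<Rightarrow> 'a set \<Rightarrow> bool" where
  "BO P r lam pol \<longleftrightarrow> (\<exists>g b. poisson (polP P pol) (polr (lamr r lam) pol) g b \<and>
      (\<forall>s. (s \<in> pol \<longrightarrow> adv P (lamr r lam) b s \<ge> 0) \<and> (s \<notin> pol \<longrightarrow> adv P (lamr r lam) b s \<le> 0)))"

text \<open>lam0 is a Whittle index of s: alpha*_s(lambda) > 0 for lambda < lam0 and < 0 for lambda > lam0,
  where alpha*_s(lambda) = alpha^pi_s(lambda) for (any) BO policy pol and any bias b of pol.\<close>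
definition is_whittle :: "(bool \<Rightarrow> 'a::finite \<Rightarrow> 'a \<Rightarrow> real) \<Rightarrow> (bool \<Rightarrow> 'a \<Rightarrow> real) \<Rightarrow> 'a \<Rightarrow> real \<Rightarrow> bool" where
  "is_whittle P r s lam0 \<longleftrightarrow> (\<forall>lam pol g b. BO P r lam pol \<and> poisson (polP P pol) (polr (lamr r lam) pol) g b \<longrightarrow>
      (lam < lam0 \<longrightarrow> adv P (lamr r lam) b s > 0) \<and> (lam > lam0 \<longrightarrow> adv P (lamr r lam) b s < 0))"

definition indexable :: "(bool \<Rightarrow> 'a::finite \<Rightarrow> 'a \<Rightarrow> real) \<Rightarrow> (bool \<Rightarrow> 'a \<Rightarrow> real) \<Rightarrow> bool" where
  "indexable P r \<longleftrightarrow> (\<forall>s. \<exists>lam0. is_whittle P r s lam0)"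

definition whittle :: "(bool \<Rightarrow> 'a::finite \<Rightarrow> 'a \<Rightarrow> real) \<Rightarrow> (bool \<Rightarrow> 'a \<Rightarrow> real) \<Rightarrow> 'a \<Rightarrow> real" where
  "whittle P r s = (THE lam0. is_whittle P r s lam0)"

definition mnorm :: "('a::finite \<Rightarrow> 'a \<Rightarrow> real) \<Rightarrow> real" where
  "mnorm A = Max (range (\<lambda>i. \<Sum>j\<in>UNIV. \<bar>A i j\<bar>))"

definition mdist :: "(bool \<Rightarrow> 'a::finite \<Rightarrow> 'a \<Rightarrow> real) \<Rightarrow> (bool \<Rightarrow> 'a \<Rightarrow> 'a \<Rightarrow> real) \<Rightarrow> real" where
  "mdist P Q = max (mnorm (\<lambda>i j. P False i j - Q False i j)) (mnorm (\<lambda>i j. P True i j - Q True i j))"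

definition same_support :: "(bool \<Rightarrow> 'a \<Rightarrow> 'a \<Rightarrow> real) \<Rightarrow> (bool \<Rightarrow> 'a \<Rightarrow> 'a \<Rightarrow> real) \<Rightarrow> bool" where
  "same_support P Q \<longleftrightarrow> (\<forall>a i j. P a i j > 0 \<longleftrightarrow> Q a i j > 0)"

text \<open>Expected hitting time E[tau_{s,t}], tau_{s,t} = min{n >= 1 : X_n = t} with X_0 = s:
  E[tau] = sum_{n>=0} P(tau > n) = sum_{n>=0} (Q^n 1)_s, Q = A with column t zeroed.\<close>
definition taboo :: "('a \<Rightarrow> 'a \<Rightarrow> real) \<Rightarrow> 'a \<Rightarrow> 'a \<Rightarrow> 'a \<Rightarrow> real" where
  "taboo A t i j = (if j = t then 0 else A i j)"

fun survive :: "('a::finite \<Rightarrow> 'a \<Rightarrow> real) \<Rightarrow> 'a \<Rightarrow> nat \<Rightarrow> 'a \<Rightarrow> real" where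
  "survive A t 0 i = 1"
| "survive A t (Suc n) i = (\<Sum>j\<in>UNIV. taboo A t i j * survive A t n j)"

definition hit_time :: "('a::finite \<Rightarrow> 'a \<Rightarrow> real) \<Rightarrow> 'a \<Rightarrow> 'a \<Rightarrow> real" where
  "hit_time A s t = (\<Sum>n. survive A t n s)"

definition diameter :: "('a::finite \<Rightarrow> 'a \<Rightarrow> real) \<Rightarrow> real" where
  "diameter A = Max {hit_time A s t | s t. recurrent A t}"

definition max_diameter :: "(bool \<Rightarrow> 'a::finite \<Rightarrow> 'a \<Rightarrow> real) \<Rightarrow> real" where
  "max_diameter P = Max (range (\<lambda>pol. diameter (polP P pol)))"

text \<open>Assumption (A). If all Whittle indices coincide the second minimum is over the empty set,
  read as +infinity (no constraint).\<close>
definition assumption_A :: "(bool \<Rightarrow> 'a::finite \<Rightarrow> 'a \<Rightarrow> real) \<Rightarrow> (bool \<Rightarrow> 'a \<Rightarrow> real) \<Rightarrow> (bool \<Rightarrow> 'a \<Rightarrow> 'a \<Rightarrow> real) \<Rightarrow> bool" where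
  "assumption_A P r Q \<longleftrightarrow> mdist P Q \<le> 1 / max_diameter P \<and>
     (\<forall>s s'. whittle P r s \<noteq> whittle P r s' \<longrightarrow> mdist P Q \<le> \<bar>whittle P r s - whittle P r s'\<bar> / 2)"

end

theory Submission
  imports Defs
begin


lemma stoch_nonneg: "stochastic M \<Longrightarrow> 0 \<le> M i j" by (simp add: stochastic_def)
lemma stoch_sum: "stochastic M \<Longrightarrow> (\<Sum>j\<in>UNIV. M i j) = 1" by (simp add: stochastic_def)

lemma taboo_nonneg: "stochastic M \<Longrightarrow> 0 \<le> taboo M t i j"
  by (simp add: taboo_def stoch_nonneg)

lemma surv_nonneg: assumes "stochastic M" shows "0 \<le> survive M t n i"
  using assms by (induction n arbitrary: i) (auto intro!: sum_nonneg mult_nonneg_nonneg taboo_nonneg)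

lemma surv_le1: assumes "stochastic M" shows "survive M t n i \<le> 1"
proof (induction n arbitrary: i)
  case 0 then show ?case by simp
next
  case (Suc n)
  have "survive M t (Suc n) i \<le> (\<Sum>j\<in>UNIV. M i j)"
    unfolding survive.simps
  proof (rule sum_mono)
    fix j
    have "taboo M t i j \<le> M i j" using assms by (simp add: taboo_def stoch_nonneg)
    then show "taboo M t i j * survive M t n j \<le> M i j"
      using Suc[of j] surv_nonneg[OF assms] taboo_nonneg[OF assms]
      by (metis mult.right_neutral mult_mono order_trans stoch_nonneg[OF assms])
  qed
  then show ?case using stoch_sum[OF assms] by simp
qed

lemma surv_Suc_le: assumes "stochastic M" shows "survive M t (Suc n) i \<le> survive M t n i"
proof (induction n arbitrary: i)
  case 0 then show ?case using surv_le1[OF assms, of t 1 i] by simp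
next
  case (Suc n)
  have "survive M t (Suc (Suc n)) i = (\<Sum>j\<in>UNIV. taboo M t i j * survive M t (Suc n) j)"
    by (rule survive.simps(2))
  also have "\<dots> \<le> (\<Sum>j\<in>UNIV. taboo M t i j * survive M t n j)"
    by (rule sum_mono, rule mult_left_mono[OF Suc taboo_nonneg[OF assms]])
  also have "\<dots> = survive M t (Suc n) i" by simp
  finally show ?case .
qed

lemma surv_antimono: assumes "stochastic M" "n \<le> m" shows "survive M t m i \<le> survive M t n i"
proof -
  have "decseq (\<lambda>n. survive M t n i)" by (rule decseq_SucI) (rule surv_Suc_le[OF assms(1)])
  then show ?thesis using assms(2) by (simp add: decseq_def)
qed

lemma surv_add: assumes "stochastic M" "\<forall>j. survive M t m j \<le> \<rho>"
  shows "survive M t (n + m) i \<le> \<rho> * survive M t n i"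
proof (induction n arbitrary: i)
  case 0 then show ?case using assms(2) by simp
next
  case (Suc n)
  have "survive M t (Suc n + m) i = (\<Sum>j\<in>UNIV. taboo M t i j * survive M t (n + m) j)" by simp
  also have "\<dots> \<le> (\<Sum>j\<in>UNIV. taboo M t i j * (\<rho> * survive M t n j))"
    by (rule sum_mono, rule mult_left_mono[OF Suc taboo_nonneg[OF assms(1)]])
  also have "\<dots> = \<rho> * survive M t (Suc n) i" by (simp add: sum_distrib_left algebra_simps)
  finally show ?case .
qed

lemma surv_pow: assumes "stochastic M" "\<forall>j. survive M t N j \<le> \<rho>" "0 \<le> \<rho>"
  shows "survive M t (k * N) i \<le> \<rho> ^ k"
proof (induction k arbitrary: i)
  case 0 then show ?case by simp
next
  case (Suc k)
  have "survive M t (Suc k * N) i = survive M t (k * N + N) i" by (simp add: add.commute)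
  also have "\<dots> \<le> \<rho> * survive M t (k * N) i" by (rule surv_add[OF assms(1,2)])
  also have "\<dots> \<le> \<rho> * \<rho> ^ k" using Suc assms(3) by (simp add: mult_left_mono)
  finally show ?case by simp
qed

lemma surv_step_lt: assumes "stochastic M" "M i j > 0" "j = t \<or> survive M t n j < 1"
  shows "survive M t (Suc n) i < 1"
proof -
  define v where "v k = (if k = t then 0 else survive M t n k)" for k
  have v1: "v k \<le> 1" for k using surv_le1[OF assms(1)] by (simp add: v_def)
  have vj: "v j < 1" using assms(3) by (auto simp: v_def)
  have eq: "survive M t (Suc n) i = (\<Sum>k\<in>UNIV. M i k * v k)"
    by (simp add: v_def taboo_def) (rule sum.cong, auto)
  have "M i j * (1 - v j) \<le> (\<Sum>k\<in>UNIV. M i k * (1 - v k))"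
    by (rule member_le_sum) (auto intro!: mult_nonneg_nonneg stoch_nonneg[OF assms(1)] simp: v1)
  moreover have "0 < M i j * (1 - v j)" using assms(2) vj by simp
  moreover have "(\<Sum>k\<in>UNIV. M i k * (1 - v k)) = 1 - (\<Sum>k\<in>UNIV. M i k * v k)"
    using stoch_sum[OF assms(1)] by (simp add: right_diff_distrib sum_subtractf)
  ultimately show ?thesis using eq by linarith
qed

lemma trancl_surv: assumes "(i, t) \<in> {(x,y). M x y > 0}\<^sup>+" "stochastic M"
  shows "\<exists>n. survive M t n i < 1"
  using assms(1)
proof (induction rule: converse_trancl_induct)
  case (base y)
  then show ?case by (intro exI[of _ "Suc 0"]) (rule surv_step_lt[OF assms(2)], auto)
next
  case (step y z)
  then obtain n where "survive M t n z < 1" by auto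
  then show ?case using step by (intro exI[of _ "Suc n"]) (rule surv_step_lt[OF assms(2)], auto)
qed

lemma reach_trancl: assumes "stochastic M" "\<forall>i. reach M i t"
  shows "(i, t) \<in> {(x,y). M x y > 0}\<^sup>+"
proof (cases "i = t")
  case False
  then show ?thesis using assms(2) by (auto simp: reach_def rtrancl_eq_or_trancl)
next
  case True
  have "\<exists>j. M t j > 0"
  proof (rule ccontr)
    assume "\<not> ?thesis"
    then have "\<forall>j. M t j = 0" using stoch_nonneg[OF assms(1), of t] by (metis antisym not_le)
    then show False using stoch_sum[OF assms(1), of t] by simp
  qed
  then obtain j where "M t j > 0" by auto
  moreover have "(j, t) \<in> {(x,y). M x y > 0}\<^sup>*" using assms(2) by (simp add: reach_def)
  ultimately show ?thesis using True by (auto intro: rtrancl_into_trancl2)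
qed

lemma surv_summable: assumes "stochastic M" "\<forall>i. reach M i t"
  shows "summable (\<lambda>n. survive M t n i)"
proof -
  have "\<forall>i. \<exists>n. survive M t n i < 1"
    using trancl_surv[OF reach_trancl[OF assms] assms(1)] by blast
  then obtain nf where nf: "\<forall>i. survive M t (nf i) i < 1" by metis
  define N where "N = Max (range nf)"
  have le: "survive M t N j < 1" for j
  proof -
    have "nf j \<le> N" unfolding N_def by (rule Max_ge) auto
    then show ?thesis using surv_antimono[OF assms(1), of "nf j" N t j] nf[rule_format, of j] by linarith
  qed
  define \<rho>0 where "\<rho>0 = Max (range (\<lambda>j. survive M t N j))"
  have "\<rho>0 \<in> range (\<lambda>j. survive M t N j)" unfolding \<rho>0_def by (rule Max_in) auto
  then have r0: "\<rho>0 < 1" using le by auto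
  define \<rho> where "\<rho> = max \<rho>0 (1/2)"
  have rho: "0 < \<rho>" "\<rho> < 1" using r0 by (auto simp: \<rho>_def)
  have bnd: "\<forall>j. survive M t N j \<le> \<rho>" unfolding \<rho>_def \<rho>0_def by (auto intro: max.coboundedI1)
  have Npos: "0 < N" using le[of i] by (cases N) auto
  define \<sigma> where "\<sigma> = root N \<rho>"
  have sig: "0 < \<sigma>" "\<sigma> < 1" "\<sigma> ^ N = \<rho>" using rho Npos by (auto simp: \<sigma>_def)
  have bd: "survive M t n i \<le> \<sigma> ^ n / \<rho>" for n
  proof -
    have "survive M t n i \<le> survive M t ((n div N) * N) i"
      by (rule surv_antimono[OF assms(1)]) simp
    also have "\<dots> \<le> \<rho> ^ (n div N)" by (rule surv_pow[OF assms(1) bnd]) (use rho in auto)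
    also have "\<dots> = (\<sigma> ^ (N * (n div N + 1))) / \<rho>"
    proof -
      have "\<sigma> ^ (N * (n div N + 1)) = \<rho> ^ (n div N) * \<rho>"
        by (simp only: power_mult sig(3)) simp
      then show ?thesis using rho by simp
    qed
    also have "\<dots> \<le> \<sigma> ^ n / \<rho>"
    proof -
      have e1: "n div N * N + n mod N = n" by (rule div_mult_mod_eq)
      have e2: "n mod N < N" using Npos by simp
      have e3: "N * (n div N + 1) = n div N * N + N" by (simp add: algebra_simps)
      have "n \<le> N * (n div N + 1)" using e1 e2 e3 by linarith
      then have "\<sigma> ^ (N * (n div N + 1)) \<le> \<sigma> ^ n" by (rule power_decreasing) (use sig in auto)
      then show ?thesis using rho by (simp add: divide_right_mono)
    qed
    finally show ?thesis .
  qed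
  have sm: "summable (\<lambda>n. \<sigma> ^ n / \<rho>)" using sig by (simp add: summable_divide)
  show ?thesis
  proof (rule summable_comparison_test'[OF sm])
    fix n :: nat
    show "norm (survive M t n i) \<le> \<sigma> ^ n / \<rho>"
      using bd[of n] surv_nonneg[OF assms(1), of t n i] by simp
  qed
qed



lemma ht_eq: assumes "stochastic M" "\<forall>i. reach M i t"
  shows "hit_time M i t = 1 + (\<Sum>j\<in>UNIV. taboo M t i j * hit_time M j t)"
proof -
  have sm: "summable (\<lambda>n. survive M t n j)" for j by (rule surv_summable[OF assms])
  have "(\<Sum>n. survive M t (Suc n) i) = (\<Sum>n. survive M t n i) - survive M t 0 i"
    by (rule suminf_split_head[OF sm])
  moreover have "(\<Sum>n. survive M t (Suc n) i) = (\<Sum>n. \<Sum>j\<in>UNIV. taboo M t i j * survive M t n j)"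
    by simp
  moreover have "\<dots> = (\<Sum>j\<in>UNIV. \<Sum>n. taboo M t i j * survive M t n j)"
    by (rule suminf_sum) (intro summable_mult sm)
  moreover have "\<dots> = (\<Sum>j\<in>UNIV. taboo M t i j * hit_time M j t)"
    unfolding hit_time_def by (rule sum.cong) (auto intro!: suminf_mult sm)
  ultimately show ?thesis unfolding hit_time_def by simp
qed

lemma ht_nonneg: assumes "stochastic M" "\<forall>i. reach M i t" shows "0 \<le> hit_time M i t"
  unfolding hit_time_def by (rule suminf_nonneg[OF surv_summable[OF assms]]) (rule surv_nonneg[OF assms(1)])

lemma ht_ge1: assumes "stochastic M" "\<forall>i. reach M i t" shows "1 \<le> hit_time M i t"
proof -
  have "0 \<le> (\<Sum>j\<in>UNIV. taboo M t i j * hit_time M j t)"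
    by (intro sum_nonneg mult_nonneg_nonneg taboo_nonneg[OF assms(1)] ht_nonneg[OF assms])
  then show ?thesis using ht_eq[OF assms, of i] by simp
qed

lemma rep_bound:
  assumes "stochastic M" "\<forall>i. reach M i t"
    and eq: "\<forall>i. e i = w i + (\<Sum>j\<in>UNIV. taboo M t i j * e j)" and wb: "\<forall>i. \<bar>w i\<bar> \<le> W"
  shows "\<bar>e i\<bar> \<le> W * hit_time M i t"
proof -
  define Em where "Em = Max (range (\<lambda>i. \<bar>e i\<bar>))"
  have Em: "\<bar>e j\<bar> \<le> Em" for j unfolding Em_def by (rule Max_ge) auto
  have key: "\<forall>i. \<bar>e i\<bar> \<le> W * (\<Sum>k<n. survive M t k i) + Em * survive M t n i" for n
  proof (induction n)
    case 0 then show ?case using Em by simp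
  next
    case (Suc n)
    show ?case
    proof
      fix i
      have "\<bar>e i\<bar> \<le> \<bar>w i\<bar> + \<bar>\<Sum>j\<in>UNIV. taboo M t i j * e j\<bar>"
        using eq[rule_format, of i] by (metis abs_triangle_ineq)
      also have "\<bar>\<Sum>j\<in>UNIV. taboo M t i j * e j\<bar> \<le> (\<Sum>j\<in>UNIV. taboo M t i j * \<bar>e j\<bar>)"
        by (rule order_trans[OF sum_abs]) (simp add: abs_mult taboo_nonneg[OF assms(1)])
      also have "\<dots> \<le> (\<Sum>j\<in>UNIV. taboo M t i j * (W * (\<Sum>k<n. survive M t k j) + Em * survive M t n j))"
        by (rule sum_mono, rule mult_left_mono) (use Suc taboo_nonneg[OF assms(1)] in auto)
      also have "\<dots> = W * (\<Sum>j\<in>UNIV. taboo M t i j * (\<Sum>k<n. survive M t k j)) + Em * survive M t (Suc n) i"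
        by (simp add: algebra_simps sum.distrib sum_distrib_left)
      finally have A: "\<bar>e i\<bar> \<le> \<bar>w i\<bar> + (W * (\<Sum>j\<in>UNIV. taboo M t i j * (\<Sum>k<n. survive M t k j)) + Em * survive M t (Suc n) i)"
        by simp
      have B: "(\<Sum>k<Suc n. survive M t k i) = 1 + (\<Sum>j\<in>UNIV. taboo M t i j * (\<Sum>k<n. survive M t k j))"
        by (simp only: sum.lessThan_Suc_shift survive.simps) (simp add: sum_distrib_left sum.swap[of _ UNIV])
      show "\<bar>e i\<bar> \<le> W * (\<Sum>k<Suc n. survive M t k i) + Em * survive M t (Suc n) i"
        using A B wb[rule_format, of i] by (simp add: algebra_simps)
    qed
  qed
  have sm: "summable (\<lambda>n. survive M t n i)" by (rule surv_summable[OF assms(1,2)])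
  have lim: "(\<lambda>n. W * (\<Sum>k<n. survive M t k i) + Em * survive M t n i) \<longlonglongrightarrow> W * hit_time M i t + Em * 0"
    unfolding hit_time_def
    by (intro tendsto_add tendsto_mult_left summable_LIMSEQ sm summable_LIMSEQ_zero)
  show ?thesis using LIMSEQ_le_const[OF lim] key by auto
qed

lemma gain_bound: assumes "stochastic M" "poisson M u g b" "\<forall>i. \<bar>u i\<bar> \<le> R" shows "\<bar>g\<bar> \<le> R"
proof -
  have "Max (range b) \<in> range b" by (rule Max_in) auto
  then obtain i1 where i1: "b i1 = Max (range b)" by (metis rangeE)
  have bi1: "b j \<le> b i1" for j unfolding i1 by (rule Max_ge) auto
  have "Min (range b) \<in> range b" by (rule Min_in) auto
  then obtain i2 where i2: "b i2 = Min (range b)" by (metis rangeE)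
  have bi2: "b i2 \<le> b j" for j unfolding i2 by (rule Min_le) auto
  have "(\<Sum>j\<in>UNIV. M i1 j * b j) \<le> (\<Sum>j\<in>UNIV. M i1 j * b i1)"
    by (rule sum_mono, rule mult_left_mono[OF bi1 stoch_nonneg[OF assms(1)]])
  also have "\<dots> = b i1" using stoch_sum[OF assms(1)] by (simp add: sum_distrib_right[symmetric])
  finally have 1: "(\<Sum>j\<in>UNIV. M i1 j * b j) \<le> b i1" .
  have "b i2 = (\<Sum>j\<in>UNIV. M i2 j * b i2)" using stoch_sum[OF assms(1)] by (simp add: sum_distrib_right[symmetric])
  also have "\<dots> \<le> (\<Sum>j\<in>UNIV. M i2 j * b j)"
    by (rule sum_mono, rule mult_left_mono[OF bi2 stoch_nonneg[OF assms(1)]])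
  finally have 2: "b i2 \<le> (\<Sum>j\<in>UNIV. M i2 j * b j)" .
  have "g + b i1 = u i1 + (\<Sum>j\<in>UNIV. M i1 j * b j)" "g + b i2 = u i2 + (\<Sum>j\<in>UNIV. M i2 j * b j)"
    using assms(2) by (auto simp: poisson_def)
  then show ?thesis using 1 2 assms(3)[rule_format, of i1] assms(3)[rule_format, of i2] by (simp add: abs_le_iff)
qed

lemma bias_bound: assumes "stochastic M" "\<forall>i. reach M i t" "poisson M u g b" "\<forall>i. \<bar>u i\<bar> \<le> R"
  shows "\<bar>b i - b t\<bar> \<le> 2 * R * hit_time M i t"
proof -
  have gb: "\<bar>g\<bar> \<le> R" by (rule gain_bound[OF assms(1,3,4)])
  have "\<bar>(\<lambda>j. b j - b t) i\<bar> \<le> (2 * R) * hit_time M i t"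
  proof (rule rep_bound[OF assms(1,2), where w = "\<lambda>i. u i - g"])
    show "\<forall>i. (b i - b t) = (u i - g) + (\<Sum>j\<in>UNIV. taboo M t i j * (b j - b t))"
    proof
      fix i
      have "(\<Sum>j\<in>UNIV. taboo M t i j * (b j - b t)) = (\<Sum>j\<in>UNIV. M i j * (b j - b t))"
        by (rule sum.cong) (auto simp: taboo_def)
      also have "\<dots> = (\<Sum>j\<in>UNIV. M i j * b j) - b t"
        using stoch_sum[OF assms(1)] by (simp add: right_diff_distrib sum_subtractf sum_distrib_right[symmetric])
      finally show "(b i - b t) = (u i - g) + (\<Sum>j\<in>UNIV. taboo M t i j * (b j - b t))"
        using assms(3) by (simp add: poisson_def) (metis add_diff_cancel_left' diff_add_eq add.commute)
    qed
    show "\<forall>i. \<bar>u i - g\<bar> \<le> 2 * R"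
    proof
      fix i show "\<bar>u i - g\<bar> \<le> 2 * R" using assms(4)[rule_format, of i] gb by (smt (verit))
    qed
  qed
  then show ?thesis by simp
qed

lemma center_bound: fixes x v :: "'a::finite \<Rightarrow> real"
  assumes "(\<Sum>j\<in>UNIV. x j) = 0" "\<forall>j. \<bar>v j - m\<bar> \<le> R"
  shows "\<bar>\<Sum>j\<in>UNIV. x j * v j\<bar> \<le> (\<Sum>j\<in>UNIV. \<bar>x j\<bar>) * R"
proof -
  have "(\<Sum>j\<in>UNIV. x j * v j) = (\<Sum>j\<in>UNIV. x j * (v j - m))"
    using assms(1) by (simp add: right_diff_distrib sum_subtractf sum_distrib_right[symmetric])
  also have "\<bar>\<dots>\<bar> \<le> (\<Sum>j\<in>UNIV. \<bar>x j\<bar> * R)"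
    by (rule order_trans[OF sum_abs], rule sum_mono) (simp add: abs_mult mult_left_mono assms(2))
  finally show ?thesis by (simp add: sum_distrib_right)
qed

lemma hhat_bound:
  assumes A: "stochastic A" "\<forall>i. reach A i t" and Ah: "stochastic Ah" "\<forall>i. reach Ah i t"
    and rows: "\<forall>i. (\<Sum>j\<in>UNIV. \<bar>Ah i j - A i j\<bar>) \<le> \<delta>"
    and dh: "\<forall>i. \<delta> * hit_time A i t \<le> 1" and hm: "\<forall>i. hit_time A i t \<le> Hm" and d0: "0 \<le> \<delta>"
  shows "hit_time Ah i t \<le> 2 * Hm"
proof -
  define Mh where "Mh = Max (range (\<lambda>i. hit_time Ah i t))"
  have "Mh \<in> range (\<lambda>i. hit_time Ah i t)" unfolding Mh_def by (rule Max_in) auto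
  then obtain i0 where i0: "hit_time Ah i0 t = Mh" by auto
  have leM: "hit_time Ah j t \<le> Mh" for j unfolding Mh_def by (rule Max_ge) auto
  have Mh0: "0 \<le> Mh" using ht_nonneg[OF Ah, of i0] i0 by simp
  define z where "z i = (\<Sum>j\<in>UNIV. (taboo Ah t i j - taboo A t i j) * hit_time Ah j t)" for i
  have zb: "\<forall>i. \<bar>z i\<bar> \<le> \<delta> * (Mh / 2)"
  proof
    fix i
    have "z i = (\<Sum>j\<in>UNIV. (Ah i j - A i j) * (if j = t then 0 else hit_time Ah j t))"
      unfolding z_def by (rule sum.cong) (auto simp: taboo_def)
    also have "\<bar>\<dots>\<bar> \<le> (\<Sum>j\<in>UNIV. \<bar>Ah i j - A i j\<bar>) * (Mh / 2)"
    proof (rule center_bound)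
      show "(\<Sum>j\<in>UNIV. Ah i j - A i j) = 0" using stoch_sum[OF A(1)] stoch_sum[OF Ah(1)] by (simp add: sum_subtractf)
      show "\<forall>j. \<bar>(if j = t then 0 else hit_time Ah j t) - Mh / 2\<bar> \<le> Mh / 2"
      proof
        fix j show "\<bar>(if j = t then 0 else hit_time Ah j t) - Mh / 2\<bar> \<le> Mh / 2"
        proof -
          have "0 \<le> (if j = t then 0 else hit_time Ah j t)" "(if j = t then 0 else hit_time Ah j t) \<le> Mh"
            using leM[of j] ht_nonneg[OF Ah, of j] Mh0 by auto
          then show ?thesis unfolding abs_le_iff by linarith
        qed
      qed
    qed
    also have "\<dots> \<le> \<delta> * (Mh / 2)" using rows Mh0 by (simp add: mult_right_mono)
    finally show "\<bar>z i\<bar> \<le> \<delta> * (Mh / 2)" .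
  qed
  have fb: "\<bar>(\<lambda>j. hit_time Ah j t - hit_time A j t) i\<bar> \<le> (\<delta> * (Mh / 2)) * hit_time A i t" for i
  proof (rule rep_bound[OF A, where w = z, OF _ zb])
    show "\<forall>i. hit_time Ah i t - hit_time A i t = z i + (\<Sum>j\<in>UNIV. taboo A t i j * (hit_time Ah j t - hit_time A j t))"
    proof
      fix i
      have e1: "hit_time Ah i t = 1 + (\<Sum>j\<in>UNIV. taboo Ah t i j * hit_time Ah j t)" by (rule ht_eq[OF Ah])
      have e2: "hit_time A i t = 1 + (\<Sum>j\<in>UNIV. taboo A t i j * hit_time A j t)" by (rule ht_eq[OF A])
      have e3: "(\<Sum>j\<in>UNIV. taboo A t i j * (hit_time Ah j t - hit_time A j t)) =
          (\<Sum>j\<in>UNIV. taboo A t i j * hit_time Ah j t) - (\<Sum>j\<in>UNIV. taboo A t i j * hit_time A j t)"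
        by (simp add: right_diff_distrib sum_subtractf)
      have e4: "z i = (\<Sum>j\<in>UNIV. taboo Ah t i j * hit_time Ah j t) - (\<Sum>j\<in>UNIV. taboo A t i j * hit_time Ah j t)"
        by (simp add: z_def left_diff_distrib sum_subtractf)
      show "hit_time Ah i t - hit_time A i t = z i + (\<Sum>j\<in>UNIV. taboo A t i j * (hit_time Ah j t - hit_time A j t))"
        using e1 e2 e3 e4 by linarith
    qed
  qed
  have hb: "(\<delta> * (Mh / 2)) * hit_time A i t \<le> Mh / 2" for i
  proof -
    have "(\<delta> * (Mh / 2)) * hit_time A i t = (\<delta> * hit_time A i t) * (Mh / 2)" by simp
    also have "\<dots> \<le> 1 * (Mh / 2)" by (rule mult_right_mono) (use dh Mh0 in auto)
    finally show ?thesis by simp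
  qed
  have "hit_time Ah j t \<le> hit_time A j t + Mh / 2" for j
    using fb[of j] hb[of j] unfolding abs_le_iff by linarith
  then have "Mh \<le> Hm + Mh / 2" using i0 hm[rule_format, of i0] by (metis add_right_mono order_trans)
  then show ?thesis using leM[of i] by simp
qed

lemma reach_all: fixes M :: "'a::finite \<Rightarrow> 'a \<Rightarrow> real" assumes "single_rec_class M" "recurrent M t" shows "reach M i t"
proof -
  define S where "S x = {y. reach M x y}" for x
  have "\<exists>j. reach M i j \<and> (\<forall>k. reach M i k \<longrightarrow> card (S j) \<le> card (S k))"
    by (rule ex_has_least_nat[of "reach M i" i]) (simp add: reach_def)
  then obtain j where ij: "reach M i j" and mn: "\<forall>k. reach M i k \<longrightarrow> card (S j) \<le> card (S k)" by blast
  have "recurrent M j" unfolding recurrent_def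
  proof (intro allI impI)
    fix k assume jk: "reach M j k"
    have sub: "S k \<subseteq> S j" using jk by (auto simp: S_def reach_def)
    have "reach M i k" using ij jk by (auto simp: reach_def)
    then have "card (S j) \<le> card (S k)" using mn by blast
    have fin: "finite (S j)" by simp
    have "S k = S j" using sub card_mono[OF fin sub] \<open>card (S j) \<le> card (S k)\<close>
      by (intro card_subset_eq[OF fin sub]) linarith
    moreover have "j \<in> S j" by (simp add: S_def reach_def)
    ultimately have "j \<in> S k" by simp
    then show "reach M k j" by (simp add: S_def)
  qed
  then have "reach M j t" using assms unfolding single_rec_class_def by blast
  then show ?thesis using ij by (auto simp: reach_def)
qed



lemma stoch_polP: assumes "\<forall>a. stochastic (P a)" shows "stochastic (polP P pol)"
proof -
  have "stochastic (P True)" "stochastic (P False)" using assms by auto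
  then show ?thesis unfolding stochastic_def polP_def
  proof (intro conjI allI)
    fix i
    show "(\<Sum>j\<in>UNIV. if i \<in> pol then P True i j else P False i j) = 1"
      using \<open>stochastic (P True)\<close> \<open>stochastic (P False)\<close> by (cases "i \<in> pol") (auto simp: stochastic_def)
  qed (use \<open>stochastic (P True)\<close> \<open>stochastic (P False)\<close> in \<open>auto simp: stochastic_def\<close>)
qed

lemma rows_bound:
  fixes P Ph :: "bool \<Rightarrow> 'a::finite \<Rightarrow> 'a \<Rightarrow> real"
  shows "(\<Sum>j\<in>UNIV. \<bar>Ph a i j - P a i j\<bar>) \<le> mdist P Ph"
proof -
  have "(\<Sum>j\<in>UNIV. \<bar>P a i j - Ph a i j\<bar>) \<le> mnorm (\<lambda>i j. P a i j - Ph a i j)"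
    unfolding mnorm_def by (rule Max_ge) auto
  also have "\<dots> \<le> mdist P Ph" unfolding mdist_def by (cases a) auto
  finally show ?thesis by (simp add: abs_minus_commute)
qed

lemma polrows: "(\<Sum>j\<in>UNIV. \<bar>polP Ph pol i j - polP P pol i j\<bar>) \<le> mdist P Ph"
  unfolding polP_def using rows_bound[of Ph True i P] rows_bound[of Ph False i P] by (cases "i \<in> pol") auto

theorem mainTheorem5:
  fixes P :: "bool \<Rightarrow> 'a::finite \<Rightarrow> 'a \<Rightarrow> real" and r :: "bool \<Rightarrow> 'a \<Rightarrow> real"
  assumes "\<forall>a. stochastic (P a)"
    and "unichain P"
    and "indexable P r"
  shows "\<exists>c>0. \<forall>Ph :: bool \<Rightarrow> 'a \<Rightarrow> 'a \<Rightarrow> real.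
           (\<forall>a. stochastic (Ph a)) \<and> same_support P Ph \<and> assumption_A P r Ph \<longrightarrow>
           (\<forall>pol s g b gh bh.
              poisson (polP P pol) (polr r pol) g b \<and> poisson (polP Ph pol) (polr r pol) gh bh \<longrightarrow>
              \<bar>adv P r b s - adv Ph r bh s\<bar> \<le> c * mdist P Ph)"
proof -
  define tp where "tp pol = (SOME t. recurrent (polP P pol) t)" for pol
  define Hm where "Hm pol = Max (range (\<lambda>i. hit_time (polP P pol) i (tp pol)))" for pol
  define R0 where "R0 = (\<Sum>a\<in>UNIV. \<Sum>i\<in>UNIV. \<bar>r a i\<bar>)"
  define cp where "cp pol = 16 * R0 * Hm pol ^ 2 + 8 * R0 * Hm pol" for pol
  define c where "c = 1 + (\<Sum>pol\<in>UNIV. cp pol)"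
  have R0: "0 \<le> R0" unfolding R0_def by (intro sum_nonneg) auto
  have rb: "\<bar>polr r pol i\<bar> \<le> R0" for pol i
  proof -
    have "\<bar>r a i\<bar> \<le> R0" for a
    proof -
      have "\<bar>r a i\<bar> \<le> (\<Sum>i\<in>UNIV. \<bar>r a i\<bar>)" by (rule member_le_sum) auto
      also have "\<dots> \<le> R0" unfolding R0_def by (rule member_le_sum[of a]) (auto intro: sum_nonneg)
      finally show ?thesis .
    qed
    then show ?thesis by (simp add: polr_def)
  qed
  have stA: "stochastic (polP P pol)" for pol by (rule stoch_polP[OF assms(1)])
  have recA: "recurrent (polP P pol) (tp pol)" for pol
  proof -
    have "\<exists>t. recurrent (polP P pol) t" using assms(2) by (simp add: unichain_def single_rec_class_def)
    then show ?thesis unfolding tp_def by (rule someI_ex)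
  qed
  have reachA: "\<forall>i. reach (polP P pol) i (tp pol)" for pol
    using reach_all[OF _ recA] assms(2) unfolding unichain_def by blast
  have Hle: "hit_time (polP P pol) i (tp pol) \<le> Hm pol" for pol i
    unfolding Hm_def by (rule Max_ge) auto
  have Hm0: "0 \<le> Hm pol" for pol
    using Hle[of pol] ht_ge1[OF stA reachA, of pol] by (meson order_trans zero_le_one)
  have cp0: "0 \<le> cp pol" for pol unfolding cp_def using R0 Hm0[of pol] by simp
  have cpc: "cp pol \<le> c" for pol
  proof -
    have "cp pol \<le> (\<Sum>pol\<in>UNIV. cp pol)" by (rule member_le_sum) (auto simp: cp0)
    then show ?thesis unfolding c_def by simp
  qed
  have "0 \<le> (\<Sum>pol\<in>UNIV. cp pol)" by (rule sum_nonneg) (simp add: cp0)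
  then have c0: "0 < c" unfolding c_def by linarith
  show ?thesis
  proof (intro exI[of _ c] conjI c0 allI impI)
    fix Ph :: "bool \<Rightarrow> 'a \<Rightarrow> 'a \<Rightarrow> real" and pol s g b gh bh
    assume H1: "(\<forall>a. stochastic (Ph a)) \<and> same_support P Ph \<and> assumption_A P r Ph"
    assume H2: "poisson (polP P pol) (polr r pol) g b \<and> poisson (polP Ph pol) (polr r pol) gh bh"
    define A where "A = polP P pol"
    define Ah where "Ah = polP Ph pol"
    define t where "t = tp pol"
    define \<delta> where "\<delta> = mdist P Ph"
    define K where "K = Hm pol"
    have sA: "stochastic A" unfolding A_def by (rule stA)
    have sAh: "stochastic Ah" unfolding Ah_def by (rule stoch_polP) (use H1 in auto)
    have rA: "\<forall>i. reach A i t" unfolding A_def t_def by (rule reachA)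
    have "{(x, y). Ah x y > 0} = {(x, y). A x y > 0}"
      using H1 unfolding same_support_def A_def Ah_def polP_def by auto
    then have rAh: "\<forall>i. reach Ah i t" using rA by (simp add: reach_def)
    have rows: "\<forall>i. (\<Sum>j\<in>UNIV. \<bar>Ah i j - A i j\<bar>) \<le> \<delta>" unfolding Ah_def A_def \<delta>_def using polrows by blast
    have d0: "0 \<le> \<delta>" using rows by (meson order_trans sum_nonneg abs_ge_zero)
    have HK: "\<forall>i. hit_time A i t \<le> K" unfolding A_def t_def K_def using Hle by blast
    have K0: "0 \<le> K" unfolding K_def by (rule Hm0)
    have dH: "\<forall>i. \<delta> * hit_time A i t \<le> 1"
    proof
      fix i
      have fin: "finite {hit_time A s t' | s t'. recurrent A t'}"
      proof -
        have "{hit_time A s t' | s t'. recurrent A t'} \<subseteq> range (\<lambda>(s, t'). hit_time A s t')" by auto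
        then show ?thesis by (rule finite_subset) simp
      qed
      have "hit_time A i t \<le> diameter A" unfolding diameter_def
        by (rule Max_ge[OF fin]) (use recA[of pol] in \<open>auto simp: A_def t_def\<close>)
      also have "\<dots> \<le> max_diameter P" unfolding max_diameter_def A_def by (rule Max_ge) auto
      finally have hm: "hit_time A i t \<le> max_diameter P" .
      have h1: "1 \<le> hit_time A i t" by (rule ht_ge1[OF sA rA])
      have "\<delta> \<le> 1 / max_diameter P" using H1 by (simp add: assumption_A_def \<delta>_def)
      then have "\<delta> * max_diameter P \<le> 1" using hm h1 by (simp add: field_simps)
      moreover have "\<delta> * hit_time A i t \<le> \<delta> * max_diameter P" using hm d0 by (rule mult_left_mono)
      ultimately show "\<delta> * hit_time A i t \<le> 1" by linarith
    qed
    have Hh: "hit_time Ah i t \<le> 2 * K" for i by (rule hhat_bound[OF sA rA sAh rAh rows dH HK d0])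
    have pA: "poisson A (polr r pol) g b" and pAh: "poisson Ah (polr r pol) gh bh"
      using H2 by (auto simp: A_def Ah_def)
    have rb': "\<forall>i. \<bar>polr r pol i\<bar> \<le> R0" using rb by blast
    have bB: "\<bar>b j - b t\<bar> \<le> 2 * R0 * K" for j
    proof -
      have "\<bar>b j - b t\<bar> \<le> 2 * R0 * hit_time A j t" by (rule bias_bound[OF sA rA pA rb'])
      also have "\<dots> \<le> 2 * R0 * K" using HK R0 by (simp add: mult_left_mono)
      finally show ?thesis .
    qed
    have bhB: "\<bar>bh j - bh t\<bar> \<le> 4 * R0 * K" for j
    proof -
      have "\<bar>bh j - bh t\<bar> \<le> 2 * R0 * hit_time Ah j t" by (rule bias_bound[OF sAh rAh pAh rb'])
      also have "\<dots> \<le> 2 * R0 * (2 * K)" by (rule mult_left_mono[OF Hh[of j]]) (use R0 in simp)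
      finally show ?thesis by simp
    qed
    define d where "d j = b j - bh j" for j
    define u where "u i = - (\<Sum>j\<in>UNIV. (Ah i j - A i j) * b j)" for i
    have pd: "poisson Ah u (g - gh) d"
      unfolding poisson_def
    proof
      fix i
      have e1: "g + b i = polr r pol i + (\<Sum>j\<in>UNIV. A i j * b j)" using pA by (simp add: poisson_def)
      have e2: "gh + bh i = polr r pol i + (\<Sum>j\<in>UNIV. Ah i j * bh j)" using pAh by (simp add: poisson_def)
      have e3: "(\<Sum>j\<in>UNIV. (Ah i j - A i j) * b j) = (\<Sum>j\<in>UNIV. Ah i j * b j) - (\<Sum>j\<in>UNIV. A i j * b j)"
        by (simp add: left_diff_distrib sum_subtractf)
      have e4: "(\<Sum>j\<in>UNIV. Ah i j * d j) = (\<Sum>j\<in>UNIV. Ah i j * b j) - (\<Sum>j\<in>UNIV. Ah i j * bh j)"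
        by (simp add: d_def right_diff_distrib sum_subtractf)
      show "g - gh + d i = u i + (\<Sum>j\<in>UNIV. Ah i j * d j)"
        using e1 e2 e3 e4 by (simp add: u_def d_def)
    qed
    have ub: "\<forall>i. \<bar>u i\<bar> \<le> \<delta> * (2 * R0 * K)"
    proof
      fix i
      have "\<bar>\<Sum>j\<in>UNIV. (Ah i j - A i j) * b j\<bar> \<le> (\<Sum>j\<in>UNIV. \<bar>Ah i j - A i j\<bar>) * (2 * R0 * K)"
      proof (rule center_bound)
        show "(\<Sum>j\<in>UNIV. Ah i j - A i j) = 0" using stoch_sum[OF sA] stoch_sum[OF sAh] by (simp add: sum_subtractf)
        show "\<forall>j. \<bar>b j - b t\<bar> \<le> 2 * R0 * K" using bB by blast
      qed
      also have "\<dots> \<le> \<delta> * (2 * R0 * K)" using rows R0 K0 by (simp add: mult_right_mono)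
      finally show "\<bar>u i\<bar> \<le> \<delta> * (2 * R0 * K)" by (simp add: u_def)
    qed
    have dB: "\<bar>d j - d t\<bar> \<le> 8 * \<delta> * R0 * K ^ 2" for j
    proof -
      have "\<bar>d j - d t\<bar> \<le> 2 * (\<delta> * (2 * R0 * K)) * hit_time Ah j t" by (rule bias_bound[OF sAh rAh pd ub])
      also have "\<dots> \<le> 2 * (\<delta> * (2 * R0 * K)) * (2 * K)" by (rule mult_left_mono[OF Hh[of j]]) (use R0 K0 d0 in simp)
      finally show ?thesis by (simp add: power2_eq_square algebra_simps)
    qed
    define T1 where "T1 = (\<Sum>j\<in>UNIV. (P True s j - P False s j) * d j)"
    define x where "x j = (Ph True s j - P True s j) - (Ph False s j - P False s j)" for j
    define T2 where "T2 = (\<Sum>j\<in>UNIV. x j * bh j)"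
    have advd: "adv P r b s - adv Ph r bh s = T1 - T2"
    proof -
      have "(\<Sum>j\<in>UNIV. (P True s j - P False s j) * b j) - (\<Sum>j\<in>UNIV. (Ph True s j - Ph False s j) * bh j)
         = (\<Sum>j\<in>UNIV. (P True s j - P False s j) * b j - (Ph True s j - Ph False s j) * bh j)"
        by (simp add: sum_subtractf)
      also have "\<dots> = (\<Sum>j\<in>UNIV. (P True s j - P False s j) * d j - x j * bh j)"
        by (rule sum.cong) (auto simp: d_def x_def algebra_simps)
      also have "\<dots> = T1 - T2" by (simp add: T1_def T2_def sum_subtractf)
      finally show ?thesis by (simp add: adv_def)
    qed
    have sP: "stochastic (P a)" "stochastic (Ph a)" for a using assms(1) H1 by auto
    have T1b: "\<bar>T1\<bar> \<le> 2 * (8 * \<delta> * R0 * K ^ 2)"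
    proof -
      have "\<bar>T1\<bar> \<le> (\<Sum>j\<in>UNIV. \<bar>P True s j - P False s j\<bar>) * (8 * \<delta> * R0 * K ^ 2)"
        unfolding T1_def
      proof (rule center_bound)
        show "(\<Sum>j\<in>UNIV. P True s j - P False s j) = 0" using stoch_sum[OF sP(1)] by (simp add: sum_subtractf)
        show "\<forall>j. \<bar>d j - d t\<bar> \<le> 8 * \<delta> * R0 * K ^ 2" using dB by blast
      qed
      moreover have "(\<Sum>j\<in>UNIV. \<bar>P True s j - P False s j\<bar>) \<le> 2"
      proof -
        have "(\<Sum>j\<in>UNIV. \<bar>P True s j - P False s j\<bar>) \<le> (\<Sum>j\<in>UNIV. P True s j + P False s j)"
          by (rule sum_mono) (use stoch_nonneg[OF sP(1), of True s] stoch_nonneg[OF sP(1), of False s] in \<open>auto simp: abs_le_iff\<close>)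
        also have "\<dots> = 2" using stoch_sum[OF sP(1)] by (simp add: sum.distrib)
        finally show ?thesis .
      qed
      moreover have "0 \<le> 8 * \<delta> * R0 * K ^ 2" using d0 R0 by simp
      ultimately show ?thesis by (meson mult_right_mono order_trans)
    qed
    have T2b: "\<bar>T2\<bar> \<le> (2 * \<delta>) * (4 * R0 * K)"
    proof -
      have "\<bar>T2\<bar> \<le> (\<Sum>j\<in>UNIV. \<bar>x j\<bar>) * (4 * R0 * K)"
        unfolding T2_def
      proof (rule center_bound)
        show "(\<Sum>j\<in>UNIV. x j) = 0" using stoch_sum[OF sP(1)] stoch_sum[OF sP(2)] by (simp add: x_def sum_subtractf)
        show "\<forall>j. \<bar>bh j - bh t\<bar> \<le> 4 * R0 * K" using bhB by blast
      qed
      moreover have "(\<Sum>j\<in>UNIV. \<bar>x j\<bar>) \<le> 2 * \<delta>"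
      proof -
        have "(\<Sum>j\<in>UNIV. \<bar>x j\<bar>) \<le> (\<Sum>j\<in>UNIV. \<bar>Ph True s j - P True s j\<bar> + \<bar>Ph False s j - P False s j\<bar>)"
          by (rule sum_mono) (simp add: x_def abs_triangle_ineq4)
        also have "\<dots> \<le> \<delta> + \<delta>" unfolding sum.distrib \<delta>_def
          by (intro add_mono rows_bound)
        finally show ?thesis by simp
      qed
      moreover have "0 \<le> 4 * R0 * K" using R0 K0 by simp
      ultimately show ?thesis by (meson mult_right_mono order_trans)
    qed
    have "\<bar>adv P r b s - adv Ph r bh s\<bar> \<le> \<bar>T1\<bar> + \<bar>T2\<bar>" unfolding advd by (rule abs_triangle_ineq4)
    also have "\<dots> \<le> \<delta> * cp pol" using T1b T2b unfolding cp_def K_def by (simp add: algebra_simps)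
    also have "\<dots> \<le> c * \<delta>" using cpc[of pol] d0 by (simp add: mult_left_mono mult.commute)
    finally show "\<bar>adv P r b s - adv Ph r bh s\<bar> \<le> c * mdist P Ph" by (simp add: \<delta>_def)
  qed
qed

end
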